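(* Fix $a>0$, $b>0$, $c>0$, $\theta>0$ with $\zeta:=\frac{b^2-a(c-\theta)}{a^2}<0$. Let $\kappa=b/a$, $s=\sqrt{-\zeta}$, $z=\frac{c-\theta}{b}$, $p=\frac{b^2}{a(c-\theta)}$, $\bar x=\max\{0,\kappa-\frac{\theta}{2as}\}$, and $$\bar a_M=\frac{\Bigl(b+c^2-3c\theta+2\theta^2+\sqrt{b(b-2c\theta+2\theta^2)}\Bigr)b^2}{(c-\theta)^3}.$$ (Symmetric branch) If $a\le\frac{2b^2}{c-\theta}$, $P(0,\kappa-s)\ge0$ and $P(\bar x,\kappa+s)\ge0$, then the profile in which both players assign probability $\tfrac12$ to each of $\kappa-s$, $\kappa+s$ is an on-domain mixed equilibrium of the truncated contest. (Endpoint branch) If $\frac{2b^2}{c-\theta}\le a\le\bar a_M$, then the profile in which both players assign probability $1-p$ to $0$ and $p$ to $z$ is an on-domain mixed equilibrium of the truncated contest. Wherever the relevant branch condition holds, the equilibrium has $E[x]=E[y]=\kappa$, $\operatorname{Var}(x)=\operatorname{Var}(y)=-\zeta$, and common payoff $\tfrac12-\theta\kappa$.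
   Context: $P(x,y)=\tfrac12+(x-y)\bigl(c-b(x+y)+axy\bigr)$, $\bar P=\min\{1,\max\{0,P\}\}$. The truncated contest is the two-player complete-information game with efforts $x,y\ge0$ and payoffs $\bar P(x,y)-\theta x$ for $X$ and $1-\bar P(x,y)-\theta y$ for $Y$. An equilibrium is on-domain if $0\le P(x,y)\le1$ (so $\bar P=P$) for all pairs $(x,y)$ in the product of the supports of the equilibrium strategies. The condition $a\le\bar a_M$ is understood to require $\bar a_M$ to be a real number. *)

theory Defs
  imports "HOL-Probability.Probability"
begin

definition Pc :: "real \<Rightarrow> real \<Rightarrow> real \<Rightarrow> real \<Rightarrow> real \<Rightarrow> real" where
  "Pc a b c x y = 1/2 + (x - y) * (c - b * (x + y) + a * x * y)"

definition Pbar :: "real \<Rightarrow> real \<Rightarrow> real \<Rightarrow> real \<Rightarrow> real \<Rightarrow> real" where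
  "Pbar a b c x y = min 1 (max 0 (Pc a b c x y))"

definition payX :: "real \<Rightarrow> real \<Rightarrow> real \<Rightarrow> real \<Rightarrow> real \<Rightarrow> real \<Rightarrow> real" where
  "payX a b c \<theta> x y = Pbar a b c x y - \<theta> * x"

definition payY :: "real \<Rightarrow> real \<Rightarrow> real \<Rightarrow> real \<Rightarrow> real \<Rightarrow> real \<Rightarrow> real" where
  "payY a b c \<theta> x y = 1 - Pbar a b c x y - \<theta> * y"

definition EpayX :: "real \<Rightarrow> real \<Rightarrow> real \<Rightarrow> real \<Rightarrow> real pmf \<Rightarrow> real pmf \<Rightarrow> real" where
  "EpayX a b c \<theta> \<sigma> \<tau> =
     measure_pmf.expectation (pair_pmf \<sigma> \<tau>) (\<lambda>(x, y). payX a b c \<theta> x y)"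

definition EpayY :: "real \<Rightarrow> real \<Rightarrow> real \<Rightarrow> real \<Rightarrow> real pmf \<Rightarrow> real pmf \<Rightarrow> real" where
  "EpayY a b c \<theta> \<sigma> \<tau> =
     measure_pmf.expectation (pair_pmf \<sigma> \<tau>) (\<lambda>(x, y). payY a b c \<theta> x y)"

definition mixed_equilibrium ::
  "real \<Rightarrow> real \<Rightarrow> real \<Rightarrow> real \<Rightarrow> real pmf \<Rightarrow> real pmf \<Rightarrow> bool" where
  "mixed_equilibrium a b c \<theta> \<sigma> \<tau> \<longleftrightarrow>
     finite (set_pmf \<sigma>) \<and> finite (set_pmf \<tau>) \<and>
     set_pmf \<sigma> \<subseteq> {0..} \<and> set_pmf \<tau> \<subseteq> {0..} \<and>
     (\<forall>x'\<ge>0. EpayX a b c \<theta> (return_pmf x') \<tau> \<le> EpayX a b c \<theta> \<sigma> \<tau>) \<and>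
     (\<forall>y'\<ge>0. EpayY a b c \<theta> \<sigma> (return_pmf y') \<le> EpayY a b c \<theta> \<sigma> \<tau>)"

definition on_domain :: "real \<Rightarrow> real \<Rightarrow> real \<Rightarrow> real pmf \<Rightarrow> real pmf \<Rightarrow> bool" where
  "on_domain a b c \<sigma> \<tau> \<longleftrightarrow>
     (\<forall>x\<in>set_pmf \<sigma>. \<forall>y\<in>set_pmf \<tau>. 0 \<le> Pc a b c x y \<and> Pc a b c x y \<le> 1)"

definition two_point :: "real \<Rightarrow> real \<Rightarrow> real \<Rightarrow> real pmf" where
  "two_point q u v = map_pmf (\<lambda>t. if t then v else u) (bernoulli_pmf q)"

end

theory Submission
  imports Defs
begin

lemma E_tp: "0 \<le> q \<Longrightarrow> q \<le> 1 \<Longrightarrow>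
  measure_pmf.expectation (two_point q u v) f = (1-q) * f u + q * f v"
  unfolding two_point_def by simp

lemma set_tp: "set_pmf (two_point q u v) \<subseteq> {u, v}"
  unfolding two_point_def by auto

lemma E_dev1: "0 \<le> q \<Longrightarrow> q \<le> 1 \<Longrightarrow>
  measure_pmf.expectation (pair_pmf (return_pmf x) (two_point q u v)) f = (1-q) * f (x,u) + q * f (x,v)"
  by (simp add: pair_return_pmf1 E_tp)

lemma E_dev2: "0 \<le> q \<Longrightarrow> q \<le> 1 \<Longrightarrow>
  measure_pmf.expectation (pair_pmf (two_point q u v) (return_pmf y)) f = (1-q) * f (u,y) + q * f (v,y)"
  by (simp add: pair_return_pmf2 E_tp)

lemma E_pair: assumes "0 \<le> q" "q \<le> 1" shows
  "measure_pmf.expectation (pair_pmf (two_point q u v) (two_point q u v)) f =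
    (1-q) * (1-q) * f (u,u) + (1-q) * q * f (u,v) + q * (1-q) * f (v,u) + q * q * f (v,v)"
proof -
  have "pair_pmf (two_point q u v) (two_point q u v) =
     map_pmf (\<lambda>(a, b). ((\<lambda>t. if t then v else u) a, (\<lambda>t. if t then v else u) b)) (pair_pmf (bernoulli_pmf q) (bernoulli_pmf q))"
    unfolding two_point_def by (rule map_pair[symmetric])
  then have "measure_pmf.expectation (pair_pmf (two_point q u v) (two_point q u v)) f =
     measure_pmf.expectation (pair_pmf (bernoulli_pmf q) (bernoulli_pmf q)) (\<lambda>ab. f (if fst ab then v else u, if snd ab then v else u))"
    by (simp add: case_prod_beta)
  also have "\<dots> = (\<Sum>ab\<in>UNIV. (\<lambda>ab. f (if fst ab then v else u, if snd ab then v else u)) ab * pmf (pair_pmf (bernoulli_pmf q) (bernoulli_pmf q)) ab)"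
    by (rule integral_measure_pmf_real) auto
  also have "\<dots> = (1-q) * (1-q) * f (u,u) + (1-q) * q * f (u,v) + q * (1-q) * f (v,u) + q * q * f (v,v)"
    using assms by (simp add: UNIV_Times_UNIV[symmetric] UNIV_bool pmf_pair algebra_simps del: UNIV_Times_UNIV)
  finally show ?thesis .
qed

lemma clip_comb:
  fixes q u1 u2 L :: real
  assumes q: "0 \<le> q" "q \<le> 1" and sum: "(1-q) * u1 + q * u2 = L"
    and c1: "u1 < 0 \<Longrightarrow> q \<le> L" and c2: "u2 < 0 \<Longrightarrow> 1-q \<le> L"
  shows "(1-q) * min 1 (max 0 u1) + q * min 1 (max 0 u2) \<le> L"
proof -
  have m1: "min 1 (max 0 u1) \<le> 1" "0 \<le> min 1 (max 0 u1)" by auto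
  have m2: "min 1 (max 0 u2) \<le> 1" "0 \<le> min 1 (max 0 u2)" by auto
  have A: "(1-q) * min 1 (max 0 u1) \<le> 1-q" using m1 q by (simp add: mult_left_le)
  have B: "q * min 1 (max 0 u2) \<le> q" using m2 q by (simp add: mult_left_le)
  show ?thesis
  proof (cases "u1 < 0")
    case True
    then have "min 1 (max 0 u1) = 0" by simp
    moreover have "q \<le> L" using c1 True by simp
    ultimately show ?thesis using B by simp
  next
    case False
    then have e1: "(1-q) * min 1 (max 0 u1) \<le> (1-q) * u1" using q by (intro mult_left_mono) auto
    show ?thesis
    proof (cases "u2 < 0")
      case True
      then have "min 1 (max 0 u2) = 0" by simp
      moreover have "1-q \<le> L" using c2 True by simp
      ultimately show ?thesis using A by simp
    next
      case False
      then have "q * min 1 (max 0 u2) \<le> q * u2" using q by (intro mult_left_mono) auto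
      then show ?thesis using e1 sum by linarith
    qed
  qed
qed

lemma Pc_swap: "Pc a b c y x = 1 - Pc a b c x y"
  unfolding Pc_def by (simp add: algebra_simps)

lemma Pbar_swap: "Pbar a b c y x = 1 - Pbar a b c x y"
proof -
  have "Pc a b c y x = 1 - Pc a b c x y" by (rule Pc_swap)
  then show ?thesis unfolding Pbar_def by (simp add: min_def max_def)
qed

lemma Pbar_on: "0 \<le> Pc a b c x y \<Longrightarrow> Pc a b c x y \<le> 1 \<Longrightarrow> Pbar a b c x y = Pc a b c x y"
  unfolding Pbar_def by simp

lemma EpayX_dev: "0 \<le> q \<Longrightarrow> q \<le> 1 \<Longrightarrow> EpayX a b c \<theta> (return_pmf x) (two_point q u v)
   = (1-q) * min 1 (max 0 (Pc a b c x u)) + q * min 1 (max 0 (Pc a b c x v)) - \<theta> * x"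
  unfolding EpayX_def by (simp add: E_dev1 payX_def Pbar_def algebra_simps)

lemma EpayY_dev: "0 \<le> q \<Longrightarrow> q \<le> 1 \<Longrightarrow> EpayY a b c \<theta> (two_point q u v) (return_pmf y)
   = (1-q) * min 1 (max 0 (Pc a b c y u)) + q * min 1 (max 0 (Pc a b c y v)) - \<theta> * y"
proof -
  assume q: "0 \<le> q" "q \<le> 1"
  have py: "payY a b c \<theta> x y = Pbar a b c y x - \<theta> * y" for x
    unfolding payY_def using Pbar_swap[of a b c x y] by linarith
  show ?thesis unfolding EpayY_def using q by (simp add: E_dev2 py Pbar_def algebra_simps)
qed

lemma EpayX_eq: "0 \<le> q \<Longrightarrow> q \<le> 1 \<Longrightarrow> EpayX a b c \<theta> (two_point q u v) (two_point q u v)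
   = (1-q) * (1-q) * Pbar a b c u u + (1-q) * q * Pbar a b c u v + q * (1-q) * Pbar a b c v u + q * q * Pbar a b c v v
     - \<theta> * ((1-q) * u + q * v)"
  unfolding EpayX_def by (simp add: E_pair payX_def algebra_simps)

lemma EpayY_eq: "0 \<le> q \<Longrightarrow> q \<le> 1 \<Longrightarrow> EpayY a b c \<theta> (two_point q u v) (two_point q u v)
   = (1-q) * (1-q) * Pbar a b c u u + (1-q) * q * Pbar a b c v u + q * (1-q) * Pbar a b c u v + q * q * Pbar a b c v v
     - \<theta> * ((1-q) * u + q * v)"
proof -
  assume q: "0 \<le> q" "q \<le> 1"
  have py: "payY a b c \<theta> x y = Pbar a b c y x - \<theta> * y" for x y
    unfolding payY_def using Pbar_swap[of a b c x y] by linarith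
  show ?thesis unfolding EpayY_def using q by (simp add: E_pair py algebra_simps)
qed

lemma branchS:
  fixes a b c \<theta> k s :: real
  assumes a: "a > 0" and k: "k > 0" and s: "s > 0" and th: "\<theta> > 0" and sk: "s \<le> k"
    and hb: "b = a * k" and hc: "c = a * (s^2+k^2)+\<theta>"
    and h1: "0 \<le> Pc a b c 0 (k-s)" and h2: "0 \<le> Pc a b c (max 0 (k - \<theta>/(2 * a * s))) (k+s)"
  defines "\<sigma> \<equiv> two_point (1/2) (k-s) (k+s)"
  shows "mixed_equilibrium a b c \<theta> \<sigma> \<sigma> \<and> on_domain a b c \<sigma> \<sigma>
     \<and> measure_pmf.expectation \<sigma> (\<lambda>x. x) = k
     \<and> measure_pmf.variance \<sigma> (\<lambda>x. x) = s^2
     \<and> EpayX a b c \<theta> \<sigma> \<sigma> = 1/2 - \<theta> * k \<and> EpayY a b c \<theta> \<sigma> \<sigma> = 1/2 - \<theta> * k"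
proof -
  have Pc_eq: "Pc a b c x y = 1/2 + (x-y) * (a * (s^2+k^2)+\<theta> - a * k * (x+y) + a * x * y)" for x y
    unfolding Pc_def hb hc by simp
  define xb where "xb = max 0 (k - \<theta>/(2 * a * s))"
  have diff: "Pc a b c x (k+s) - Pc a b c x' (k+s) = (x-x') * (a * s * (x+x') + \<theta> - 2 * a * k * s)" for x x'
    unfolding Pc_eq power2_eq_square by (simp add: algebra_simps)
  have y2: "0 \<le> Pc a b c x (k+s)" if x: "0 \<le> x" for x
  proof (cases "\<theta> \<le> 2 * a * k * s")
    case True
    have "\<theta>/(2 * a * s) \<le> k" using True a s by (simp add: field_simps)
    then have xb: "xb = k - \<theta>/(2 * a * s)" by (simp add: xb_def)
    have e: "a * s * xb = a * k * s - \<theta>/2" using a s unfolding xb by (simp add: field_simps)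
    have "a * s * (x+xb) + \<theta> - 2 * a * k * s = a * s * (x-xb)"
      unfolding distrib_left right_diff_distrib using e by linarith
    then have "Pc a b c x (k+s) - Pc a b c xb (k+s) = a * s * (x-xb)^2"
      using diff[of x xb] by (simp add: power2_eq_square)
    moreover have "0 \<le> a * s * (x-xb)^2" using a s by simp
    ultimately show ?thesis using h2 unfolding xb_def[symmetric] by linarith
  next
    case False
    then have xb: "xb = 0" using a s by (simp add: xb_def field_simps)
    have "0 \<le> a * s * x" using x a s by simp
    then have "0 \<le> a * s * (x+0) + \<theta> - 2 * a * k * s" using False by simp
    then have "0 \<le> x * (a * s * (x+0) + \<theta> - 2 * a * k * s)" using x by simp
    then show ?thesis using diff[of x 0] h2 unfolding xb_def[symmetric] xb
      using h2 by (smt (verit) Pc_eq)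
  qed
  have y1: "0 \<le> Pc a b c x (k-s)" if x: "0 \<le> x" "x \<le> k" for x
  proof -
    have interp: "k * Pc a b c x (k-s) = (k-x) * Pc a b c 0 (k-s) + x * Pc a b c k (k-s) + k * a * s * x * (k-x)"
      unfolding Pc_eq power2_eq_square by (simp add: field_simps)
    have pk: "Pc a b c k (k-s) = 1/2 + s * (a * s^2+\<theta>)"
      unfolding Pc_eq power2_eq_square by (simp add: algebra_simps)
    have "0 \<le> Pc a b c k (k-s)" unfolding pk using a s th by simp
    then have "0 \<le> k * Pc a b c x (k-s)" unfolding interp using x a s k h1
      by (intro add_nonneg_nonneg mult_nonneg_nonneg) auto
    then show ?thesis using k by (simp add: zero_le_mult_iff)
  qed
  have sum: "Pc a b c x (k-s) + Pc a b c x (k+s) = 1 + 2 * \<theta> * (x-k)" for x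
    unfolding Pc_eq power2_eq_square by (simp add: algebra_simps)
  have p12: "Pc a b c (k-s) (k+s) = 1/2 - 2 * s * \<theta>"
    unfolding Pc_eq power2_eq_square by (simp add: algebra_simps)
  have pxx: "Pc a b c x x = 1/2" for x unfolding Pc_def by simp
  have p12ge: "0 \<le> Pc a b c (k-s) (k+s)" using y2[of "k-s"] sk by simp
  have p12le: "Pc a b c (k-s) (k+s) \<le> 1" unfolding p12 using mult_pos_pos[OF s th] by simp
  have p21: "Pc a b c (k+s) (k-s) = 1 - Pc a b c (k-s) (k+s)" by (rule Pc_swap)
  have setS: "set_pmf \<sigma> \<subseteq> {k-s, k+s}" unfolding \<sigma>_def by (rule set_tp)
  have od: "on_domain a b c \<sigma> \<sigma>"
    unfolding on_domain_def
  proof (intro ballI)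
    fix x y assume "x \<in> set_pmf \<sigma>" "y \<in> set_pmf \<sigma>"
    then have "x \<in> {k-s,k+s}" "y \<in> {k-s,k+s}" using setS by auto
    then show "0 \<le> Pc a b c x y \<and> Pc a b c x y \<le> 1"
      using p12ge p12le p21 by (auto simp: pxx)
  qed
  have b11: "Pbar a b c (k-s) (k-s) = 1/2" and b22: "Pbar a b c (k+s) (k+s) = 1/2"
    by (simp_all add: Pbar_def pxx)
  have b12: "Pbar a b c (k-s) (k+s) = Pc a b c (k-s) (k+s)" using Pbar_on[OF p12ge p12le] .
  have b21: "Pbar a b c (k+s) (k-s) = 1 - Pc a b c (k-s) (k+s)"
    using Pbar_on[of a b c "k+s" "k-s"] p12ge p12le p21 by simp
  have pay: "EpayX a b c \<theta> \<sigma> \<sigma> = 1/2 - \<theta> * k"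
    using EpayX_eq[of "1/2" a b c \<theta> "k-s" "k+s"] unfolding \<sigma>_def by (simp add: b11 b22 b12 b21 field_simps)
  have payY: "EpayY a b c \<theta> \<sigma> \<sigma> = 1/2 - \<theta> * k"
    using EpayY_eq[of "1/2" a b c \<theta> "k-s" "k+s"] unfolding \<sigma>_def by (simp add: b11 b22 b12 b21 field_simps)
  have dev: "(1-1/2) * min 1 (max 0 (Pc a b c x (k-s))) + 1/2 * min 1 (max 0 (Pc a b c x (k+s))) - \<theta> * x
     \<le> 1/2 - \<theta> * k" if x: "0 \<le> x" for x
  proof -
    have "(1-1/2) * min 1 (max 0 (Pc a b c x (k-s))) + 1/2 * min 1 (max 0 (Pc a b c x (k+s)))
       \<le> 1/2 + \<theta> * (x-k)"
    proof (rule clip_comb)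
      show "(1 - 1/2) * Pc a b c x (k-s) + 1/2 * Pc a b c x (k+s) = 1/2 + \<theta> * (x-k)"
        using sum[of x] by simp
      show "1/2 \<le> 1/2 + \<theta> * (x-k)" if "Pc a b c x (k-s) < 0"
      proof -
        have "\<not> x \<le> k" using y1[of x] x that by linarith
        then show ?thesis using th by simp
      qed
      show "1 - 1/2 \<le> 1/2 + \<theta> * (x-k)" if "Pc a b c x (k+s) < 0"
        using y2[OF x] that by linarith
    qed auto
    then show ?thesis by (simp add: algebra_simps)
  qed
  have eq: "mixed_equilibrium a b c \<theta> \<sigma> \<sigma>"
    unfolding mixed_equilibrium_def
  proof (intro conjI allI impI)
    show "finite (set_pmf \<sigma>)" using setS by (rule finite_subset) simp
    then show "finite (set_pmf \<sigma>)" .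
    show "set_pmf \<sigma> \<subseteq> {0..}" using setS sk s by auto
    then show "set_pmf \<sigma> \<subseteq> {0..}" .
    fix x :: real assume x: "0 \<le> x"
    show "EpayX a b c \<theta> (return_pmf x) \<sigma> \<le> EpayX a b c \<theta> \<sigma> \<sigma>"
      using dev[OF x] EpayX_dev[of "1/2" a b c \<theta> x "k-s" "k+s"] pay unfolding \<sigma>_def by simp
    show "EpayY a b c \<theta> \<sigma> (return_pmf x) \<le> EpayY a b c \<theta> \<sigma> \<sigma>"
      using dev[OF x] EpayY_dev[of "1/2" a b c \<theta> "k-s" "k+s" x] payY unfolding \<sigma>_def by simp
  qed
  have ex: "measure_pmf.expectation \<sigma> (\<lambda>x. x) = k"
    unfolding \<sigma>_def by (simp add: E_tp field_simps)
  have var: "measure_pmf.variance \<sigma> (\<lambda>x. x) = s^2"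
    unfolding ex by (simp add: \<sigma>_def E_tp power2_eq_square algebra_simps)
  show ?thesis using eq od ex var pay payY by blast
qed

lemma quad_nonneg:
  fixes al be ga x :: real
  assumes "al > 0" "be^2 \<le> 4 * al * ga"
  shows "0 \<le> al * x^2 + be * x + ga"
proof -
  have "4 * al * (al * x^2 + be * x + ga) = (2 * al * x + be)^2 + (4 * al * ga - be^2)"
    by (simp add: power2_eq_square algebra_simps)
  also have "\<dots> \<ge> 0" using assms by simp
  finally have "0 \<le> (4 * al) * (al * x^2 + be * x + ga)" by simp
  then show ?thesis using assms(1) by (simp add: zero_le_mult_iff)
qed

lemma branchE:
  fixes a b c \<theta> k z :: real
  assumes a: "a > 0" and k: "k > 0" and th: "\<theta> > 0" and kz: "2 * k \<le> z" and tz: "2 * \<theta> * z \<le> 1"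
    and hb: "b = a * k" and hc: "c = a * k * z + \<theta>"
    and hM: "a * z^2 * (z - k) \<le> 1 - \<theta> * z + sqrt (1 - 2 * \<theta> * z)"
  defines "\<sigma> \<equiv> two_point (k/z) 0 z"
  shows "mixed_equilibrium a b c \<theta> \<sigma> \<sigma> \<and> on_domain a b c \<sigma> \<sigma>
     \<and> measure_pmf.expectation \<sigma> (\<lambda>x. x) = k
     \<and> measure_pmf.variance \<sigma> (\<lambda>x. x) = k * z - k^2
     \<and> EpayX a b c \<theta> \<sigma> \<sigma> = 1/2 - \<theta> * k \<and> EpayY a b c \<theta> \<sigma> \<sigma> = 1/2 - \<theta> * k"
proof -
  have z: "z > 0" using k kz by linarith
  define p where "p = k / z"
  have p0: "0 \<le> p" and p1: "p \<le> 1/2" using k z kz by (simp_all add: p_def field_simps)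
  have pz: "p * z = k" using z by (simp add: p_def)
  have Pc_eq: "Pc a b c x y = 1/2 + (x-y) * (a * k * z + \<theta> - a * k * (x+y) + a * x * y)" for x y
    unfolding Pc_def hb hc by simp
  define al where "al = a * (z - k)"
  have al: "al > 0" using a k kz by (simp add: al_def)
  have qz: "Pc a b c x z = al * x^2 + (\<theta> - al * z) * x + (1/2 - \<theta> * z)" for x
    unfolding Pc_eq al_def power2_eq_square by (simp add: algebra_simps)
  have q0: "Pc a b c x 0 = 1/2 + x * (a * k * z + \<theta> - a * k * x)" for x
    unfolding Pc_eq by (simp add: algebra_simps)
  define R where "R = sqrt (1 - 2 * \<theta> * z)"
  have R0: "0 \<le> R" using tz by (simp add: R_def)
  have R2: "R^2 = 1 - 2 * \<theta> * z" using tz by (simp add: R_def)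
  have R1: "R \<le> 1" using th z tz by (simp add: R_def)
  have posz: "0 \<le> Pc a b c x z" if x: "0 \<le> x" for x
  proof (cases "al * z \<le> \<theta>")
    case True
    have "0 \<le> al * x^2" using al by simp
    moreover have "0 \<le> (\<theta> - al * z) * x" using True x by simp
    moreover have "0 \<le> 1/2 - \<theta> * z" using tz by simp
    ultimately show ?thesis unfolding qz by linarith
  next
    case False
    define u where "u = al * z"
    have uz: "u * z \<le> 1 - \<theta> * z + R" using hM unfolding u_def al_def R_def
      by (simp add: power2_eq_square algebra_simps)
    have ident: "z * (z * (u - \<theta>)^2 - 2 * u * R^2) = (z * u - (1 - \<theta> * z + R)) * (z * u - (1 - \<theta> * z - R))"
    proof -
      have "(z * u - (1 - \<theta> * z + R)) * (z * u - (1 - \<theta> * z - R)) = (z * u - (1 - \<theta> * z))^2 - R^2"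
        by (simp add: power2_eq_square algebra_simps)
      also have "\<dots> = z * (z * (u - \<theta>)^2 - 2 * u * R^2)"
        unfolding R2 by (simp add: power2_eq_square algebra_simps)
      finally show ?thesis by simp
    qed
    have f1: "z * u - (1 - \<theta> * z + R) \<le> 0" using uz by (simp add: algebra_simps)
    have "R^2 \<le> R" using R0 R1 by (simp add: power2_eq_square mult_left_le)
    moreover have "z * \<theta> < z * u" using False z unfolding u_def by (simp add: mult_strict_left_mono)
    ultimately have f2: "0 \<le> z * u - (1 - \<theta> * z - R)"
      using R2 by (simp add: algebra_simps)
    have "(z * u - (1 - \<theta> * z + R)) * (z * u - (1 - \<theta> * z - R)) \<le> 0"
      using f1 f2 by (simp add: mult_nonpos_nonneg)
    then have "z * (z * (u - \<theta>)^2 - 2 * u * R^2) \<le> 0" unfolding ident .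
    then have "z * (u - \<theta>)^2 - 2 * u * R^2 \<le> 0" using z by (simp add: mult_le_0_iff)
    then have "z * (al * z - \<theta>)^2 \<le> z * (2 * al * R^2)" unfolding u_def by (simp add: algebra_simps)
    then have d: "(al * z - \<theta>)^2 \<le> 2 * al * R^2" using z by simp
    have "(\<theta> - al * z)^2 \<le> 4 * al * (1/2 - \<theta> * z)"
      using d unfolding R2 by (simp add: power2_commute algebra_simps)
    then show ?thesis unfolding qz by (rule quad_nonneg[OF al])
  qed
  have sum: "(1-p) * Pc a b c x 0 + p * Pc a b c x z = 1/2 + \<theta> * (x - k)" for x
  proof -
    have "z * ((1-p) * Pc a b c x 0 + p * Pc a b c x z) = (z - k) * Pc a b c x 0 + k * Pc a b c x z"
      by (simp add: algebra_simps pz[symmetric])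
    also have "\<dots> = z * (1/2 + \<theta> * (x - k))"
      unfolding Pc_eq by (simp add: field_simps)
    finally show ?thesis using z by simp
  qed
  have pxx: "Pc a b c x x = 1/2" for x unfolding Pc_def by simp
  have p0z: "Pc a b c 0 z = 1/2 - \<theta> * z" unfolding Pc_eq by (simp add: algebra_simps)
  have p0zge: "0 \<le> Pc a b c 0 z" unfolding p0z using tz by simp
  have p0zle: "Pc a b c 0 z \<le> 1" unfolding p0z using mult_pos_pos[OF th z] by simp
  have pz0: "Pc a b c z 0 = 1 - Pc a b c 0 z" by (rule Pc_swap)
  have setS: "set_pmf \<sigma> \<subseteq> {0, z}" unfolding \<sigma>_def by (rule set_tp)
  have od: "on_domain a b c \<sigma> \<sigma>"
    unfolding on_domain_def
  proof (intro ballI)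
    fix x y assume "x \<in> set_pmf \<sigma>" "y \<in> set_pmf \<sigma>"
    then have "x \<in> {0,z}" "y \<in> {0,z}" using setS by auto
    then show "0 \<le> Pc a b c x y \<and> Pc a b c x y \<le> 1"
      using p0zge p0zle pz0 by (auto simp: pxx)
  qed
  have b11: "Pbar a b c 0 0 = 1/2" and b22: "Pbar a b c z z = 1/2"
    by (simp_all add: Pbar_def pxx)
  have b12: "Pbar a b c 0 z = Pc a b c 0 z" using Pbar_on[OF p0zge p0zle] .
  have b21: "Pbar a b c z 0 = 1 - Pc a b c 0 z"
    using Pbar_on[of a b c z 0] p0zge p0zle pz0 by simp
  have pay: "EpayX a b c \<theta> \<sigma> \<sigma> = 1/2 - \<theta> * k"
    using EpayX_eq[of p a b c \<theta> 0 z] p0 p1 pz unfolding \<sigma>_def p_def[symmetric]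
    by (simp add: b11 b22 b12 b21 algebra_simps) (simp add: field_simps)
  have payY: "EpayY a b c \<theta> \<sigma> \<sigma> = 1/2 - \<theta> * k"
    using EpayY_eq[of p a b c \<theta> 0 z] p0 p1 pz unfolding \<sigma>_def p_def[symmetric]
    by (simp add: b11 b22 b12 b21 algebra_simps) (simp add: field_simps)
  have dev: "(1-p) * min 1 (max 0 (Pc a b c x 0)) + p * min 1 (max 0 (Pc a b c x z)) - \<theta> * x
     \<le> 1/2 - \<theta> * k" if x: "0 \<le> x" for x
  proof -
    have "(1-p) * min 1 (max 0 (Pc a b c x 0)) + p * min 1 (max 0 (Pc a b c x z))
       \<le> 1/2 + \<theta> * (x-k)"
    proof (rule clip_comb[OF p0])
      show "p \<le> 1" using p1 by simp
      show "(1 - p) * Pc a b c x 0 + p * Pc a b c x z = 1/2 + \<theta> * (x-k)"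
        using sum[of x] by simp
      show "p \<le> 1/2 + \<theta> * (x-k)" if neg: "Pc a b c x 0 < 0"
      proof -
        have "x * (a * k * z + \<theta> - a * k * x) < 0" using neg unfolding q0 by simp
        then have "a * k * z + \<theta> - a * k * x < 0" using x
          by (smt (verit) mult_nonneg_nonneg)
        then have "a * k * z < a * k * x" using th by simp
        then have "z < x" using a k by simp
        then have "0 \<le> \<theta> * (x - k)" using kz k th by simp
        then show ?thesis using p1 by simp
      qed
      show "1 - p \<le> 1/2 + \<theta> * (x-k)" if "Pc a b c x z < 0"
        using posz[OF x] that by linarith
    qed
    then show ?thesis by (simp add: algebra_simps)
  qed
  have eq: "mixed_equilibrium a b c \<theta> \<sigma> \<sigma>"
    unfolding mixed_equilibrium_def
  proof (intro conjI allI impI)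
    show "finite (set_pmf \<sigma>)" using setS by (rule finite_subset) simp
    then show "finite (set_pmf \<sigma>)" .
    show "set_pmf \<sigma> \<subseteq> {0..}" using setS z by auto
    then show "set_pmf \<sigma> \<subseteq> {0..}" .
    fix x :: real assume x: "0 \<le> x"
    show "EpayX a b c \<theta> (return_pmf x) \<sigma> \<le> EpayX a b c \<theta> \<sigma> \<sigma>"
      using dev[OF x] EpayX_dev[of p a b c \<theta> x 0 z] p0 p1 pay unfolding \<sigma>_def p_def[symmetric] by simp
    show "EpayY a b c \<theta> \<sigma> (return_pmf x) \<le> EpayY a b c \<theta> \<sigma> \<sigma>"
      using dev[OF x] EpayY_dev[of p a b c \<theta> 0 z x] p0 p1 payY unfolding \<sigma>_def p_def[symmetric] by simp
  qed
  have ex: "measure_pmf.expectation \<sigma> (\<lambda>x. x) = k"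
    unfolding \<sigma>_def p_def[symmetric] using p0 p1 pz by (simp add: E_tp)
  have var: "measure_pmf.variance \<sigma> (\<lambda>x. x) = k * z - k^2"
  proof -
    have "measure_pmf.variance \<sigma> (\<lambda>x. x) = (1-p) * k^2 + p * (z - k)^2"
      unfolding ex unfolding \<sigma>_def p_def[symmetric] using p0 p1 by (simp add: E_tp)
    also have "\<dots> = k^2 - 2 * k * (p * z) + (p * z) * z"
      by (simp add: power2_eq_square algebra_simps)
    also have "\<dots> = k * z - k^2" unfolding pz by (simp add: power2_eq_square)
    finally show ?thesis .
  qed
  show ?thesis using eq od ex var pay payY by blast
qed

theorem proposition8:
  fixes a b c \<theta> :: real
  assumes ha: "a > 0" and hb: "b > 0" and hc: "c > 0" and h\<theta>: "\<theta> > 0"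
    and h\<zeta>: "(b^2 - a * (c - \<theta>)) / a^2 < 0"
  defines "\<zeta> \<equiv> (b^2 - a * (c - \<theta>)) / a^2"
    and "\<kappa> \<equiv> b / a"
    and "s \<equiv> sqrt (- ((b^2 - a * (c - \<theta>)) / a^2))"
    and "z \<equiv> (c - \<theta>) / b"
    and "p \<equiv> b^2 / (a * (c - \<theta>))"
    and "xbar \<equiv> max 0 (b / a - \<theta> / (2 * a * sqrt (- ((b^2 - a * (c - \<theta>)) / a^2))))"
    and "aM \<equiv> (b + c^2 - 3*c*\<theta> + 2*\<theta>^2 + sqrt (b * (b - 2*c*\<theta> + 2*\<theta>^2))) * b^2
               / (c - \<theta>)^3"
    and "\<sigma>S \<equiv> two_point (1/2) (b / a - sqrt (- ((b^2 - a * (c - \<theta>)) / a^2)))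
                    (b / a + sqrt (- ((b^2 - a * (c - \<theta>)) / a^2)))"
    and "\<sigma>E \<equiv> two_point (b^2 / (a * (c - \<theta>))) 0 ((c - \<theta>) / b)"
  shows
    "(a \<le> 2 * b^2 / (c - \<theta>) \<and> 0 \<le> Pc a b c 0 (\<kappa> - s) \<and> 0 \<le> Pc a b c xbar (\<kappa> + s)
      \<longrightarrow> mixed_equilibrium a b c \<theta> \<sigma>S \<sigma>S \<and> on_domain a b c \<sigma>S \<sigma>S
        \<and> measure_pmf.expectation \<sigma>S (\<lambda>x. x) = \<kappa>
        \<and> measure_pmf.variance \<sigma>S (\<lambda>x. x) = - \<zeta>
        \<and> EpayX a b c \<theta> \<sigma>S \<sigma>S = 1/2 - \<theta> * \<kappa>
        \<and> EpayY a b c \<theta> \<sigma>S \<sigma>S = 1/2 - \<theta> * \<kappa>)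
   \<and> (2 * b^2 / (c - \<theta>) \<le> a \<and> 0 \<le> b * (b - 2*c*\<theta> + 2*\<theta>^2) \<and> a \<le> aM
      \<longrightarrow> mixed_equilibrium a b c \<theta> \<sigma>E \<sigma>E \<and> on_domain a b c \<sigma>E \<sigma>E
        \<and> measure_pmf.expectation \<sigma>E (\<lambda>x. x) = \<kappa>
        \<and> measure_pmf.variance \<sigma>E (\<lambda>x. x) = - \<zeta>
        \<and> EpayX a b c \<theta> \<sigma>E \<sigma>E = 1/2 - \<theta> * \<kappa>
        \<and> EpayY a b c \<theta> \<sigma>E \<sigma>E = 1/2 - \<theta> * \<kappa>)"
proof -
  have w: "c - \<theta> > 0"
  proof -
    have "b^2 - a * (c - \<theta>) < 0" using h\<zeta> ha by (simp add: divide_less_0_iff)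
    moreover have "0 < b^2" using hb by simp
    ultimately have "0 < a * (c - \<theta>)" by linarith
    then show ?thesis using ha by (simp add: zero_less_mult_iff)
  qed
  define k where "k = b / a"
  define S where "S = sqrt (- ((b^2 - a * (c - \<theta>)) / a^2))"
  have negz: "0 < - ((b^2 - a * (c - \<theta>)) / a^2)" using h\<zeta> by simp
  have S0: "S > 0" unfolding S_def using negz by simp
  have S2: "S^2 = - ((b^2 - a * (c - \<theta>)) / a^2)" unfolding S_def using negz by simp
  have k0: "k > 0" unfolding k_def using ha hb by simp
  have hbk: "b = a * k" unfolding k_def using ha by simp
  have hcS: "c = a * (S^2 + k^2) + \<theta>" unfolding S2 k_def using ha
    by (simp add: field_simps power2_eq_square)
  have partS: "a \<le> 2 * b^2 / (c - \<theta>) \<and> 0 \<le> Pc a b c 0 (\<kappa> - s) \<and> 0 \<le> Pc a b c xbar (\<kappa> + s)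
      \<longrightarrow> mixed_equilibrium a b c \<theta> \<sigma>S \<sigma>S \<and> on_domain a b c \<sigma>S \<sigma>S
        \<and> measure_pmf.expectation \<sigma>S (\<lambda>x. x) = \<kappa>
        \<and> measure_pmf.variance \<sigma>S (\<lambda>x. x) = - \<zeta>
        \<and> EpayX a b c \<theta> \<sigma>S \<sigma>S = 1/2 - \<theta> * \<kappa>
        \<and> EpayY a b c \<theta> \<sigma>S \<sigma>S = 1/2 - \<theta> * \<kappa>" (is "_ \<longrightarrow> ?concl")
  proof (intro impI, elim conjE)
    assume A: "a \<le> 2 * b^2 / (c - \<theta>)" and B: "0 \<le> Pc a b c 0 (\<kappa> - s)" and C: "0 \<le> Pc a b c xbar (\<kappa> + s)"
    have "a * (c - \<theta>) \<le> 2 * b^2" using A w by (simp add: pos_le_divide_eq)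
    then have "(a * (c - \<theta>) - b^2) / a^2 \<le> b^2 / a^2"
      by (intro divide_right_mono) auto
    moreover have "S^2 = (a * (c - \<theta>) - b^2) / a^2" unfolding S2 by (simp add: minus_divide_left)
    moreover have "k^2 = b^2 / a^2" unfolding k_def by (simp add: power_divide)
    ultimately have "S^2 \<le> k^2" by simp
    then have Sk: "S \<le> k" using k0 S0 by (simp add: power2_le_iff_abs_le)
    have B': "0 \<le> Pc a b c 0 (k - S)" using B unfolding \<kappa>_def s_def k_def S_def .
    have C': "0 \<le> Pc a b c (max 0 (k - \<theta>/(2 * a * S))) (k + S)"
      using C unfolding \<kappa>_def s_def k_def S_def xbar_def .
    have R: "mixed_equilibrium a b c \<theta> (two_point (1/2) (k-S) (k+S)) (two_point (1/2) (k-S) (k+S))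
     \<and> on_domain a b c (two_point (1/2) (k-S) (k+S)) (two_point (1/2) (k-S) (k+S))
     \<and> measure_pmf.expectation (two_point (1/2) (k-S) (k+S)) (\<lambda>x. x) = k
     \<and> measure_pmf.variance (two_point (1/2) (k-S) (k+S)) (\<lambda>x. x) = S^2
     \<and> EpayX a b c \<theta> (two_point (1/2) (k-S) (k+S)) (two_point (1/2) (k-S) (k+S)) = 1/2 - \<theta> * k
     \<and> EpayY a b c \<theta> (two_point (1/2) (k-S) (k+S)) (two_point (1/2) (k-S) (k+S)) = 1/2 - \<theta> * k"
      by (rule branchS[OF ha k0 S0 h\<theta> Sk hbk hcS B' C'])
    have e1: "\<sigma>S = two_point (1/2) (k-S) (k+S)" unfolding \<sigma>S_def k_def S_def ..
    show ?concl using R unfolding e1 S2 \<kappa>_def \<zeta>_def k_def .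
  qed
  have partE: "2 * b^2 / (c - \<theta>) \<le> a \<and> 0 \<le> b * (b - 2*c*\<theta> + 2*\<theta>^2) \<and> a \<le> aM
      \<longrightarrow> mixed_equilibrium a b c \<theta> \<sigma>E \<sigma>E \<and> on_domain a b c \<sigma>E \<sigma>E
        \<and> measure_pmf.expectation \<sigma>E (\<lambda>x. x) = \<kappa>
        \<and> measure_pmf.variance \<sigma>E (\<lambda>x. x) = - \<zeta>
        \<and> EpayX a b c \<theta> \<sigma>E \<sigma>E = 1/2 - \<theta> * \<kappa>
        \<and> EpayY a b c \<theta> \<sigma>E \<sigma>E = 1/2 - \<theta> * \<kappa>" (is "_ \<longrightarrow> ?concl")
  proof (intro impI, elim conjE)
    assume A: "2 * b^2 / (c - \<theta>) \<le> a" and D: "0 \<le> b * (b - 2*c*\<theta> + 2*\<theta>^2)" and M: "a \<le> aM"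
    define w where "w = c - \<theta>"
    have w0: "w > 0" using w by (simp add: w_def)
    have cw: "c = w + \<theta>" by (simp add: w_def)
    define Z where "Z = w / b"
    have Z0: "Z > 0" using w0 hb by (simp add: Z_def)
    have A': "2 * b^2 \<le> a * w" using A w0 by (simp add: w_def pos_divide_le_eq)
    have kz: "2 * k \<le> Z" unfolding k_def Z_def using A' ha hb
      by (simp add: field_simps power2_eq_square)
    have D': "0 \<le> b - 2 * \<theta> * w" using D hb unfolding cw
      by (simp add: zero_le_mult_iff power2_eq_square algebra_simps)
    have tz: "2 * \<theta> * Z \<le> 1" unfolding Z_def using D' hb by (simp add: field_simps)
    have hcz: "c = a * k * Z + \<theta>" unfolding k_def Z_def using ha hb cw by simp
    define R where "R = sqrt (1 - 2 * \<theta> * Z)"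
    have Deq: "b * (b - 2*c*\<theta> + 2*\<theta>^2) = b^2 * (1 - 2 * \<theta> * Z)"
      unfolding Z_def cw using hb by (simp add: field_simps power2_eq_square)
    have sD: "sqrt (b * (b - 2*c*\<theta> + 2*\<theta>^2)) = b * R"
      unfolding Deq R_def real_sqrt_mult using hb by simp
    have cc: "b + c^2 - 3*c*\<theta> + 2*\<theta>^2 + b * R = b + w^2 - \<theta> * w + b * R"
      unfolding cw by (simp add: power2_eq_square algebra_simps)
    have "a * w^3 \<le> (b + w^2 - \<theta> * w + b * R) * b^2"
      using M unfolding aM_def sD cc w_def[symmetric] using w0 by (simp add: pos_le_divide_eq)
    then have H: "a * w^3 - w^2 * b^2 \<le> b^3 - \<theta> * w * b^2 + R * b^3"
      by (simp add: power2_eq_square power3_eq_cube algebra_simps)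
    have e1: "a * Z^2 * (Z - k) = (a * w^3 - w^2 * b^2) / b^3"
      unfolding Z_def k_def using ha hb by (simp add: field_simps power2_eq_square power3_eq_cube)
    have e2: "1 - \<theta> * Z + R = (b^3 - \<theta> * w * b^2 + R * b^3) / b^3"
      unfolding Z_def using hb by (simp add: field_simps power2_eq_square power3_eq_cube)
    have hM: "a * Z^2 * (Z - k) \<le> 1 - \<theta> * Z + sqrt (1 - 2 * \<theta> * Z)"
      unfolding R_def[symmetric] e1 e2 using H hb by (simp add: divide_right_mono)
    have R: "mixed_equilibrium a b c \<theta> (two_point (k/Z) 0 Z) (two_point (k/Z) 0 Z)
     \<and> on_domain a b c (two_point (k/Z) 0 Z) (two_point (k/Z) 0 Z)
     \<and> measure_pmf.expectation (two_point (k/Z) 0 Z) (\<lambda>x. x) = k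
     \<and> measure_pmf.variance (two_point (k/Z) 0 Z) (\<lambda>x. x) = k * Z - k^2
     \<and> EpayX a b c \<theta> (two_point (k/Z) 0 Z) (two_point (k/Z) 0 Z) = 1/2 - \<theta> * k
     \<and> EpayY a b c \<theta> (two_point (k/Z) 0 Z) (two_point (k/Z) 0 Z) = 1/2 - \<theta> * k"
      by (rule branchE[OF ha k0 h\<theta> kz tz hbk hcz hM])
    have e3: "k / Z = b^2 / (a * (c - \<theta>))" unfolding k_def Z_def w_def using ha hb w
      by (simp add: field_simps power2_eq_square)
    have e4: "\<sigma>E = two_point (k/Z) 0 Z" unfolding \<sigma>E_def e3 by (simp add: Z_def w_def)
    have e5: "k * Z - k^2 = - \<zeta>" unfolding \<zeta>_def k_def Z_def w_def using ha hb
      by (simp add: field_simps power2_eq_square)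
    show ?concl using R[unfolded e5] unfolding e4 \<kappa>_def k_def .
  qed
  show ?thesis using partS partE by blast
qed

end
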